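(* Let $m=1$, with adjoint field $c^*$, let $c_{\lim}<0$, $k>0$, $\beta\ge0$, $$\mathcal S=\{S\in\mathcal M^+: S\{c^*<k\}\ge\beta S\{c^*\ge k\}\},\qquad M_{\lim}=\frac{-c_{\lim}}{k+\beta\inf c^*}.$$ Then $\{c^*\ge k\}$ is a prior $(S^*,-c_{\lim},\mathcal S,M_{\lim})$-footprint and a posterior $(S^*,c_{\lim},\mathcal S,M_{\lim})$-zero footprint. (If $\beta=0$ then $\mathcal S=\mathcal M^+$.)
   Context: Let $T\subset\mathbb{R}$ be a time interval, $V\subset\mathbb{R}^3$ a spatial domain, and $\mathcal M^+$ the set of positive measures on the Borel sets of $T\times V$. A measurement tuple consists of $m\ge1$ nonnegative measurable functions $c_1^*,\dots,c_m^*$ on $T\times V$ (the adjoint concentration fields $c_j^*(s,y)=\int_{T\times V}p(t,x;s,y)\,dS_j^*(t,x)$ of sensor probability measures $S_j^*$, $p$ being the transition probability of the dispersion; we write $S^*=(S_1^*,\dots,S_m^* )$) together with a vector $c_{\lim}=(c_{\lim,1},\dots,c_{\lim,m})$ of nonzero reals. Write $\langle S,c^*\rangle=\int c^*\,dS$. A measure $S\in\mathcal M^+$ satisfies the measurement condition for $(S^*,c_{\lim})$ if for every $j$: $\langle S,c_j^*\rangle\ge c_{\lim,j}$ when $c_{\lim,j}>0$ (detection), and $\langle S,c_j^*\rangle<|c_{\lim,j}|$ when $c_{\lim,j}<0$ (non-detection). Given an admissible class $\mathcal S\subseteq\mathcal M^+$ and $M_{\lim}\in\mathbb R$, a measurable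 set $A\subseteq T\times V$ is: a posterior $(S^*,c_{\lim},\mathcal S,M_{\lim})$-footprint if every $S\in\mathcal S$ satisfying the measurement condition has $S(A)\ge M_{\lim}$; a prior $(S^*,c_{\lim},\mathcal S,M_{\lim})$-footprint if every $S\in\mathcal S$ with $S(A)\ge M_{\lim}$ satisfies the measurement condition; a posterior $(S^*,c_{\lim},\mathcal S,M_{\lim})$-zero footprint if every $S\in\mathcal S$ satisfying the measurement condition has $S(A)<M_{\lim}$; a prior $(S^*,c_{\lim},\mathcal S,M_{\lim})$-zero footprint if every $S\in\mathcal S$ with $S(A)<M_{\lim}$ satisfies the measurement condition. Suprema, infima and level sets $\{c^*\ge k\}=\{(s,y):c^*(s,y)\ge k\}$ are over $T\times V$. *)

theory Defs
  imports "HOL-Analysis.Analysis"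
begin

type_synonym pt = "real \<times> (real^3)"

definition Mplus :: "real set \<Rightarrow> (real^3) set \<Rightarrow> pt measure set" where
  "Mplus T V = {S. sets S = sets (restrict_space borel (T \<times> V))}"

definition pairing :: "pt measure \<Rightarrow> (pt \<Rightarrow> real) \<Rightarrow> ennreal" where
  "pairing S f = (\<integral>\<^sup>+ x. ennreal (f x) \<partial>S)"

definition meas_cond :: "nat \<Rightarrow> (nat \<Rightarrow> pt \<Rightarrow> real) \<Rightarrow> (nat \<Rightarrow> real) \<Rightarrow> pt measure \<Rightarrow> bool" where
  "meas_cond m cs cl S =
     (\<forall>j<m. (cl j > 0 \<longrightarrow> pairing S (cs j) \<ge> ennreal (cl j)) \<and>
            (cl j < 0 \<longrightarrow> pairing S (cs j) < ennreal \<bar>cl j\<bar>))"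

definition posterior_footprint ::
  "nat \<Rightarrow> (nat \<Rightarrow> pt \<Rightarrow> real) \<Rightarrow> (nat \<Rightarrow> real) \<Rightarrow> pt measure set \<Rightarrow> real \<Rightarrow> pt set \<Rightarrow> bool" where
  "posterior_footprint m cs cl Sc Mlim A =
     (\<forall>S\<in>Sc. meas_cond m cs cl S \<longrightarrow> emeasure S A \<ge> ennreal Mlim)"

definition prior_footprint ::
  "nat \<Rightarrow> (nat \<Rightarrow> pt \<Rightarrow> real) \<Rightarrow> (nat \<Rightarrow> real) \<Rightarrow> pt measure set \<Rightarrow> real \<Rightarrow> pt set \<Rightarrow> bool" where
  "prior_footprint m cs cl Sc Mlim A =
     (\<forall>S\<in>Sc. emeasure S A \<ge> ennreal Mlim \<longrightarrow> meas_cond m cs cl S)"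

definition posterior_zero_footprint ::
  "nat \<Rightarrow> (nat \<Rightarrow> pt \<Rightarrow> real) \<Rightarrow> (nat \<Rightarrow> real) \<Rightarrow> pt measure set \<Rightarrow> real \<Rightarrow> pt set \<Rightarrow> bool" where
  "posterior_zero_footprint m cs cl Sc Mlim A =
     (\<forall>S\<in>Sc. meas_cond m cs cl S \<longrightarrow> emeasure S A < ennreal Mlim)"

definition prior_zero_footprint ::
  "nat \<Rightarrow> (nat \<Rightarrow> pt \<Rightarrow> real) \<Rightarrow> (nat \<Rightarrow> real) \<Rightarrow> pt measure set \<Rightarrow> real \<Rightarrow> pt set \<Rightarrow> bool" where
  "prior_zero_footprint m cs cl Sc Mlim A =
     (\<forall>S\<in>Sc. emeasure S A < ennreal Mlim \<longrightarrow> meas_cond m cs cl S)"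

end

theory Submission
  imports Defs
begin

theorem mainTheorem8:
  fixes T :: "real set" and V :: "(real^3) set" and c :: "pt \<Rightarrow> real"
    and c_lim k \<beta> :: real
  assumes "T \<noteq> {}" and "V \<noteq> {}"
    and "c \<in> borel_measurable (restrict_space borel (T \<times> V))"
    and "\<forall>x\<in>T \<times> V. c x \<ge> 0"
    and "c_lim < 0" and "k > 0" and "\<beta> \<ge> 0"
  defines "Sc \<equiv> {S\<in>Mplus T V.
              emeasure S {x\<in>T \<times> V. c x < k} \<ge> ennreal \<beta> * emeasure S {x\<in>T \<times> V. c x \<ge> k}}"
    and "M_lim \<equiv> - c_lim / (k + \<beta> * Inf (c ` (T \<times> V)))"
  shows "prior_footprint 1 (\<lambda>_. c) (\<lambda>_. - c_lim) Sc M_lim {x\<in>T \<times> V. c x \<ge> k}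
       \<and> posterior_zero_footprint 1 (\<lambda>_. c) (\<lambda>_. c_lim) Sc M_lim {x\<in>T \<times> V. c x \<ge> k}"
proof -
  define L where "L = Inf (c ` (T \<times> V))"
  define A where "A = {x\<in>T \<times> V. c x \<ge> k}"
  define B where "B = {x\<in>T \<times> V. c x < k}"
  have ne: "c ` (T \<times> V) \<noteq> {}" using assms(1,2) by auto
  have bdd: "bdd_below (c ` (T \<times> V))" using assms(4) by (auto intro!: bdd_belowI[of _ 0])
  have L0: "L \<ge> 0" unfolding L_def using ne assms(4) by (auto intro!: cInf_greatest)
  have Lle: "\<And>x. x \<in> T \<times> V \<Longrightarrow> L \<le> c x" unfolding L_def using bdd by (auto intro: cInf_lower)
  have pos: "k + \<beta> * L > 0" using assms(6,7) L0 by (simp add: add_pos_nonneg)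
  have key: "pairing S c \<ge> ennreal (- c_lim)"
    if S: "S \<in> Sc" and SA: "emeasure S A \<ge> ennreal M_lim" for S
  proof -
    have sets: "sets S = sets (restrict_space borel (T \<times> V))" using S unfolding Sc_def Mplus_def by auto
    have sp: "space S = T \<times> V"
      using sets_eq_imp_space_eq[OF sets] by (simp add: space_restrict_space)
    have cm: "c \<in> borel_measurable S" using assms(3) measurable_cong_sets[OF sets refl, of borel] by (metis (no_types))
    have Am: "A \<in> sets S"
    proof -
      have "{x\<in>space S. k \<le> c x} \<in> sets S" using cm by measurable
      thus ?thesis unfolding A_def sp .
    qed
    have Bm: "B \<in> sets S"
    proof -
      have "{x\<in>space S. c x < k} \<in> sets S" using cm by measurable
      thus ?thesis unfolding B_def sp .
    qed
    have SB: "emeasure S B \<ge> ennreal \<beta> * emeasure S A" using S unfolding Sc_def A_def B_def by auto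
    have "(\<integral>\<^sup>+ x. ennreal k * indicator A x + ennreal L * indicator B x \<partial>S) \<le> (\<integral>\<^sup>+ x. ennreal (c x) \<partial>S)"
    proof (rule nn_integral_mono)
      fix x assume x: "x \<in> space S"
      show "ennreal k * indicator A x + ennreal L * indicator B x \<le> ennreal (c x)"
      proof (cases "c x < k")
        case True
        hence "x \<notin> A" "x \<in> B" using x sp by (auto simp: A_def B_def)
        thus ?thesis using Lle[of x] x sp by (simp add: ennreal_leI)
      next
        case False
        hence "x \<in> A" "x \<notin> B" using x sp by (auto simp: A_def B_def)
        thus ?thesis using False by (simp add: ennreal_leI)
      qed
    qed
    moreover have "(\<integral>\<^sup>+ x. ennreal k * indicator A x + ennreal L * indicator B x \<partial>S)
        = ennreal k * emeasure S A + ennreal L * emeasure S B"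
      using Am Bm by (simp add: nn_integral_add nn_integral_cmult_indicator)
    moreover have "ennreal L * emeasure S B \<ge> ennreal L * (ennreal \<beta> * emeasure S A)"
      using SB by (simp add: mult_left_mono)
    ultimately have "pairing S c \<ge> ennreal k * emeasure S A + ennreal L * (ennreal \<beta> * emeasure S A)"
      unfolding pairing_def by (metis (no_types, lifting) add_left_mono order_trans)
    moreover have "ennreal L * (ennreal \<beta> * emeasure S A) = ennreal (L * \<beta>) * emeasure S A"
      using L0 assms(7) by (simp add: ennreal_mult mult.assoc)
    ultimately have "pairing S c \<ge> ennreal k * emeasure S A + ennreal (L * \<beta>) * emeasure S A"
      by simp
    also have "ennreal k * emeasure S A + ennreal (L * \<beta>) * emeasure S A = ennreal (k + \<beta> * L) * emeasure S A"
    proof -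
      have "ennreal (k + \<beta> * L) = ennreal k + ennreal (L * \<beta>)"
        using L0 assms(6,7) by (simp add: ennreal_plus mult.commute)
      thus ?thesis by (simp add: distrib_right)
    qed
    finally have 1: "pairing S c \<ge> ennreal (k + \<beta> * L) * emeasure S A" .
    have "ennreal (k + \<beta> * L) * emeasure S A \<ge> ennreal (k + \<beta> * L) * ennreal M_lim"
      using SA by (simp add: mult_left_mono)
    also have "ennreal (k + \<beta> * L) * ennreal M_lim = ennreal (- c_lim)"
    proof -
      have "M_lim \<ge> 0" unfolding M_lim_def L_def[symmetric] using pos assms(5) by (simp add: divide_nonpos_pos)
      hence "ennreal (k + \<beta> * L) * ennreal M_lim = ennreal ((k + \<beta> * L) * M_lim)"
        using pos by (simp add: ennreal_mult)
      also have "(k + \<beta> * L) * M_lim = - c_lim" unfolding M_lim_def L_def[symmetric] using pos by simp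
      finally show ?thesis .
    qed
    finally show ?thesis using 1 by (metis order_trans)
  qed
  have P1: "prior_footprint 1 (\<lambda>_. c) (\<lambda>_. - c_lim) Sc M_lim A"
    unfolding prior_footprint_def meas_cond_def using key assms(5) by simp
  have P2: "posterior_zero_footprint 1 (\<lambda>_. c) (\<lambda>_. c_lim) Sc M_lim A"
    unfolding posterior_zero_footprint_def meas_cond_def
  proof (intro ballI impI)
    fix S assume S: "S \<in> Sc" and mc: "\<forall>j<(1::nat). (0 < c_lim \<longrightarrow> ennreal c_lim \<le> pairing S c) \<and>
          (c_lim < 0 \<longrightarrow> pairing S c < ennreal \<bar>c_lim\<bar>)"
    have lt: "pairing S c < ennreal (- c_lim)" using mc assms(5) by auto
    show "emeasure S A < ennreal M_lim"
    proof (rule ccontr)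
      assume "\<not> ?thesis"
      hence "ennreal M_lim \<le> emeasure S A" by (simp add: not_less)
      from key[OF S this] lt show False by simp
    qed
  qed
  show ?thesis using P1 P2 unfolding A_def by simp
qed

end
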